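(* Let $G$ be a graph with $n$ vertices and $m$ edges, let $0\leq \alpha <\alpha_0(G)$, and let $p$ be the positive inertia index of $A_{\alpha}(G)$. Then $$S_{p}(A_{\alpha}(G))\leq 2\alpha m +\frac{1}{2}\left(2m(1-\alpha)^2+\alpha^2Z_1\right)\sqrt{\frac{n(n-p)}{Z_1}},$$ where $Z_1$ is the first Zagreb index of $G$.
   Context: All graphs are simple and undirected. $A_{\alpha}(G)=\alpha D(G)+(1-\alpha)A(G)$, where $A(G)$ is the adjacency matrix and $D(G)$ the diagonal degree matrix. For a real symmetric matrix $M$ with eigenvalues $\lambda_1(M)\geq\cdots\geq\lambda_n(M)$, $S_k(M)=\sum_{i=1}^k\lambda_i(M)$. $\alpha_0(G)$ denotes the smallest $\alpha$ such that $A_{\alpha}(G)$ is positive semidefinite for all $\alpha_0(G)\leq\alpha\leq 1$. The positive inertia index of $A_\alpha(G)$ is its number of positive eigenvalues. $Z_1=\sum_{v\in V(G)}d_v^2$ is the first Zagreb index. *)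

theory Defs
  imports "Jordan_Normal_Form.Jordan_Normal_Form" "HOL-Library.Multiset"
begin

definition simple_graph :: "nat \<Rightarrow> (nat \<Rightarrow> nat \<Rightarrow> bool) \<Rightarrow> bool" where
  "simple_graph n E \<longleftrightarrow> (\<forall>i<n. \<forall>j<n. E i j \<longleftrightarrow> E j i) \<and> (\<forall>i<n. \<not> E i i)"

definition num_edges :: "nat \<Rightarrow> (nat \<Rightarrow> nat \<Rightarrow> bool) \<Rightarrow> nat" where
  "num_edges n E = card {(i, j). i < j \<and> j < n \<and> E i j}"

definition degree :: "nat \<Rightarrow> (nat \<Rightarrow> nat \<Rightarrow> bool) \<Rightarrow> nat \<Rightarrow> nat" where
  "degree n E i = card {j. j < n \<and> E i j}"

definition zagreb1 :: "nat \<Rightarrow> (nat \<Rightarrow> nat \<Rightarrow> bool) \<Rightarrow> nat" where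
  "zagreb1 n E = (\<Sum>i<n. (degree n E i)^2)"

definition adj_mat :: "nat \<Rightarrow> (nat \<Rightarrow> nat \<Rightarrow> bool) \<Rightarrow> real mat" where
  "adj_mat n E = mat n n (\<lambda>(i, j). if E i j then 1 else 0)"

definition deg_mat :: "nat \<Rightarrow> (nat \<Rightarrow> nat \<Rightarrow> bool) \<Rightarrow> real mat" where
  "deg_mat n E = mat n n (\<lambda>(i, j). if i = j then real (degree n E i) else 0)"

definition A_alpha :: "nat \<Rightarrow> (nat \<Rightarrow> nat \<Rightarrow> bool) \<Rightarrow> real \<Rightarrow> real mat" where
  "A_alpha n E a = a \<cdot>\<^sub>m deg_mat n E + (1 - a) \<cdot>\<^sub>m adj_mat n E"

definition eigs_desc :: "real mat \<Rightarrow> real list" where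
  "eigs_desc M = rev (sorted_list_of_multiset (proots (char_poly M)))"

definition S_k :: "nat \<Rightarrow> real mat \<Rightarrow> real" where
  "S_k k M = sum_list (take k (eigs_desc M))"

definition pos_inertia :: "real mat \<Rightarrow> nat" where
  "pos_inertia M = size (filter_mset (\<lambda>x. x > 0) (proots (char_poly M)))"

definition psd :: "real mat \<Rightarrow> bool" where
  "psd M \<longleftrightarrow> (\<forall>x \<in> carrier_vec (dim_row M). x \<bullet> (M *\<^sub>v x) \<ge> 0)"

definition alpha0 :: "nat \<Rightarrow> (nat \<Rightarrow> nat \<Rightarrow> bool) \<Rightarrow> real" where
  "alpha0 n E = Inf {a. 0 \<le> a \<and> a \<le> 1 \<and> (\<forall>b. a \<le> b \<and> b \<le> 1 \<longrightarrow> psd (A_alpha n E b))}"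

end

theory Submission
  imports Defs "Jordan_Normal_Form.Schur_Decomposition"
begin


lemma sym_real_eigenvalue:
  fixes M :: "real mat"
  assumes M: "M \<in> carrier_mat n n" and sym: "transpose_mat M = M" and n: "n > 0"
  shows "\<exists>e. eigenvalue M e"
proof -
  define C where "C = map_mat complex_of_real M"
  have C: "C \<in> carrier_mat n n" using M by (simp add: C_def)
  obtain as where cp: "char_poly C = (\<Prod>a\<leftarrow>as. [:- a, 1:])" and len: "length as = n"
    using char_poly_factorized[OF C] by blast
  from len n obtain mu where mu: "mu \<in> set as" by (cases as) auto
  have "poly (char_poly C) mu = 0" unfolding cp poly_prod_list prod_list_zero_iff
    using mu by auto
  hence "eigenvalue C mu" using eigenvalue_root_char_poly[OF C] by simp
  then obtain z where z: "eigenvector C z mu" unfolding eigenvalue_def by blast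
  hence zc: "z \<in> carrier_vec n" and z0: "z \<noteq> 0\<^sub>v n" and ev: "C *\<^sub>v z = mu \<cdot>\<^sub>v z"
    unfolding eigenvector_def using C by auto
  define s where "s = (C *\<^sub>v z) \<bullet>c z"
  have s1: "s = mu * (z \<bullet>c z)" unfolding s_def ev using zc by simp
  have Msym: "M $$ (i, j) = M $$ (j, i)" if "i < n" "j < n" for i j
    using arg_cong[OF sym, of "\<lambda>A. A $$ (i,j)"] that M by auto
  have s_sum: "s = (\<Sum>i<n. \<Sum>j<n. complex_of_real (M $$ (i,j)) * z $ j * cnj (z $ i))"
    unfolding s_def scalar_prod_def using zc C M
    by (auto intro!: sum.cong simp: C_def sum_distrib_right lessThan_atLeast0 row_def scalar_prod_def)
  have "cnj s = (\<Sum>i<n. \<Sum>j<n. complex_of_real (M $$ (i,j)) * cnj (z $ j) * z $ i)"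
    unfolding s_sum by (simp add: cnj_sum)
  also have "\<dots> = (\<Sum>j<n. \<Sum>i<n. complex_of_real (M $$ (i,j)) * cnj (z $ j) * z $ i)"
    by (rule sum.swap)
  also have "\<dots> = s" unfolding s_sum
    by (intro sum.cong refl, auto simp: Msym mult.commute mult.left_commute)
  finally have s2: "cnj s = s" .
  have zz: "0 < z \<bullet>c z" using conjugate_square_greater_0_vec[OF zc] z0 by simp
  hence zzi: "Im (z \<bullet>c z) = 0" and zzr: "Re (z \<bullet>c z) > 0" by (auto simp: less_complex_def)
  have "cnj mu * (z \<bullet>c z) = mu * (z \<bullet>c z)"
  proof -
    have "cnj (z \<bullet>c z) = z \<bullet>c z" using zzi by (simp add: complex_eq_iff)
    thus ?thesis using s2 s1 by (metis complex_cnj_mult)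
  qed
  hence "cnj mu = mu" using zzr by auto
  hence mur: "mu = complex_of_real (Re mu)" by (simp add: complex_eq_iff)
  have "complex_of_real (poly (char_poly M) (Re mu)) = poly (char_poly C) mu"
    unfolding C_def of_real_hom.char_poly_hom[OF M, symmetric]
    by (subst mur, simp only: of_real_hom.poly_map_poly[symmetric]) (simp add: of_real_hom.char_poly_hom[OF M])
  also have "\<dots> = 0" by fact
  finally have "poly (char_poly M) (Re mu) = 0" by simp
  thus ?thesis using eigenvalue_root_char_poly[OF M] by blast
qed



lemma real_conj_vec[simp]: "conjugate (v :: real vec) = v"
  by (intro eq_vecI) auto

lemma quad_entry:
  fixes U M :: "real mat"
  assumes U: "U \<in> carrier_mat n n" and M: "M \<in> carrier_mat n n" and i: "i < n" and j: "j < n"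
  shows "(transpose_mat U * M * U) $$ (i,j) = col U i \<bullet> (M *\<^sub>v col U j)"
proof -
  have "transpose_mat U * M * U = transpose_mat U * (M * U)"
    using U M by (intro assoc_mult_mat[of _ n n _ n _ n]) auto
  also have "\<dots> $$ (i,j) = row (transpose_mat U) i \<bullet> col (M * U) j"
    using U M i j by simp
  also have "col (M * U) j = M *\<^sub>v col U j" using col_mult2[OF M U j] .
  also have "row (transpose_mat U) i = col U i" using U i by simp
  finally show ?thesis .
qed

lemma spectral:
  fixes M :: "real mat"
  assumes "M \<in> carrier_mat n n" "transpose_mat M = M"
  shows "\<exists>U. U \<in> carrier_mat n n \<and> transpose_mat U * U = 1\<^sub>m n \<and>
    diagonal_mat (transpose_mat U * M * U)"
  using assms
proof (induction n arbitrary: M)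
  case 0
  show ?case by (intro exI[of _ "1\<^sub>m 0"]) (auto simp: diagonal_mat_def)
next
  case (Suc k)
  define n where "n = Suc k"
  have M: "M \<in> carrier_mat n n" and sym: "transpose_mat M = M" using Suc.prems n_def by auto
  obtain e where "eigenvalue M e" using sym_real_eigenvalue[OF M sym] n_def by auto
  then obtain v where "eigenvector M v e" unfolding eigenvalue_def by blast
  hence vc: "v \<in> carrier_vec n" and v0: "v \<noteq> 0\<^sub>v n" and ev: "M *\<^sub>v v = e \<cdot>\<^sub>v v"
    unfolding eigenvector_def using M by auto
  have vv: "v \<bullet> v > 0" using conjugate_square_greater_0_vec[OF vc] v0 by simp
  define w0 where "w0 = (1 / sqrt (v \<bullet> v)) \<cdot>\<^sub>v v"
  have w0c: "w0 \<in> carrier_vec n" using vc by (simp add: w0_def)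
  have w0w0: "w0 \<bullet> w0 = 1" using vc vv
    by (simp add: w0_def real_sqrt_mult[symmetric])
  have w00: "w0 \<noteq> 0\<^sub>v n" using w0w0 w0c by auto
  have evw: "M *\<^sub>v w0 = e \<cdot>\<^sub>v w0" unfolding w0_def
    using M vc ev by (simp add: mult_mat_vec smult_smult_assoc mult.commute)
  interpret cof_vec_space n "TYPE(real)" .
  define b where "b = basis_completion w0"
  note bc = basis_completion[OF w0c w00, folded b_def]
  define ws where "ws = gram_schmidt n b"
  note gs = gram_schmidt_result[OF bc(2) bc(4) bc(5) ws_def]
  have lenws: "length ws = n" using gs bc by simp
  obtain bs where bcons: "b = w0 # bs" using bc(6,7) n_def by (cases b) auto
  have hdws: "ws ! 0 = w0"
  proof -
    have "hd ws = w0" using gram_schmidt_hd[OF w0c, of bs] bcons ws_def by simp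
    moreover have "ws \<noteq> []" using lenws n_def by auto
    ultimately show ?thesis by (simp add: hd_conv_nth)
  qed
  have wsc: "ws ! i \<in> carrier_vec n" if "i < n" for i using gs(3) lenws that by auto
  have wsorth: "(ws ! i \<bullet> ws ! j = 0) = (i \<noteq> j)" if "i < n" "j < n" for i j
    using corthogonalD[OF gs(2), of i j] lenws that by simp
  have wspos: "ws ! i \<bullet> ws ! i > 0" if "i < n" for i
    using wsorth[OF that that] conjugate_square_ge_0_vec[of "ws ! i"] by simp
  define us where "us = map (\<lambda>w. (1 / sqrt (w \<bullet> w)) \<cdot>\<^sub>v w) ws"
  have lenus: "length us = n" using lenws by (simp add: us_def)
  have usc: "us ! i \<in> carrier_vec n" if "i < n" for i
    using wsc[OF that] that lenws by (simp add: us_def)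
  have usorth: "us ! i \<bullet> us ! j = (if i = j then 1 else 0)" if "i < n" "j < n" for i j
  proof -
    have "us ! i \<bullet> us ! j = (1 / sqrt (ws ! i \<bullet> ws ! i)) * (1 / sqrt (ws ! j \<bullet> ws ! j)) * (ws ! i \<bullet> ws ! j)"
      using that lenws wsc[OF that(1)] wsc[OF that(2)] by (simp add: us_def)
    thus ?thesis using wsorth[OF that] wspos[OF that(1)]
      by (auto simp: real_sqrt_mult[symmetric])
  qed
  have us0: "us ! 0 = w0" using hdws w0w0 lenws n_def by (simp add: us_def)
  define U where "U = mat_of_cols n us"
  have U: "U \<in> carrier_mat n n" using lenus mat_of_cols_carrier(1)[of n us] by (simp add: U_def)
  have colU: "col U j = us ! j" if "j < n" for j
    using that lenus usc[OF that] by (simp add: U_def)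
  have UtU: "transpose_mat U * U = 1\<^sub>m n"
    by (rule eq_matI, insert U, auto simp: colU usorth)
  define A' where "A' = transpose_mat U * M * U"
  have A': "A' \<in> carrier_mat n n" using U M by (simp add: A'_def)
  have A'sym: "transpose_mat A' = A'"
    unfolding A'_def using U M sym
    by (simp add: transpose_mult[of _ n n _ n] assoc_mult_mat[of _ n n _ n _ n])
  have A'col0: "A' $$ (i, 0) = (if i = 0 then e else 0)" if "i < n" for i
  proof -
    have "A' $$ (i,0) = us ! i \<bullet> (M *\<^sub>v w0)" unfolding A'_def
      using quad_entry[OF U M that, of 0] n_def colU that us0 by simp
    also have "\<dots> = e * (us ! i \<bullet> us ! 0)" using evw usc[OF that] w0c us0 by simp
    finally show ?thesis using usorth[OF that, of 0] n_def by simp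
  qed
  have A'row0: "A' $$ (0, j) = (if j = 0 then e else 0)" if "j < n" for j
    using A'col0[OF that] arg_cong[OF A'sym, of "\<lambda>A. A $$ (j,0)"] that A' n_def by auto
  define C where "C = mat k k (\<lambda>(i,j). A' $$ (Suc i, Suc j))"
  have C: "C \<in> carrier_mat k k" by (simp add: C_def)
  have Csym: "transpose_mat C = C"
  proof (rule eq_matI)
    fix i j assume "i < dim_row C" "j < dim_col C"
    thus "transpose_mat C $$ (i, j) = C $$ (i, j)"
      using arg_cong[OF A'sym, of "\<lambda>A. A $$ (Suc i, Suc j)"] A' n_def by (auto simp: C_def)
  qed (auto simp: C_def)
  obtain V where V: "V \<in> carrier_mat k k" and VtV: "transpose_mat V * V = 1\<^sub>m k"
    and Vd: "diagonal_mat (transpose_mat V * C * V)" using Suc.IH[OF C Csym] by blast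
  define B where "B = four_block_mat (1\<^sub>m 1) (0\<^sub>m 1 k) (0\<^sub>m k 1) V"
  have B: "B \<in> carrier_mat n n" using four_block_carrier_mat[of "1\<^sub>m 1" 1 1 V k k] V n_def by (simp add: B_def)
  have A'blk: "A' = four_block_mat (mat 1 1 (\<lambda>_. e)) (0\<^sub>m 1 k) (0\<^sub>m k 1) C"
  proof (rule eq_matI)
    fix i j assume ij: "i < dim_row (four_block_mat (mat 1 1 (\<lambda>_. e)) (0\<^sub>m 1 k) (0\<^sub>m k 1) C)"
      "j < dim_col (four_block_mat (mat 1 1 (\<lambda>_. e)) (0\<^sub>m 1 k) (0\<^sub>m k 1) C)"
    hence i: "i < n" and j: "j < n" using C n_def by auto
    show "A' $$ (i, j) = four_block_mat (mat 1 1 (\<lambda>_. e)) (0\<^sub>m 1 k) (0\<^sub>m k 1) C $$ (i, j)"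
    proof (cases "i = 0 \<or> j = 0")
      case True
      thus ?thesis using A'col0[OF i] A'row0[OF j] i j C n_def by auto
    next
      case False
      then obtain i' j' where "i = Suc i'" "j = Suc j'" by (cases i; cases j) auto
      thus ?thesis using i j C n_def by (simp add: C_def)
    qed
  qed (insert A' C n_def, auto)
  define W where "W = U * B"
  have W: "W \<in> carrier_mat n n" using U B by (simp add: W_def)
  have WtW: "transpose_mat W * W = 1\<^sub>m n"
  proof -
    have "transpose_mat W * W = transpose_mat B * (transpose_mat U * U) * B"
      unfolding W_def using U B
      by (simp add: transpose_mult[of _ n n _ n] assoc_mult_mat[of _ n n _ n _ n])
    also have "\<dots> = transpose_mat B * B" using UtU B by simp
    also have "\<dots> = 1\<^sub>m n" unfolding B_def n_def using V VtV
      by (simp add: transpose_four_block_mat[of _ 1 1 _ k _ k] mult_four_block_mat[of _ 1 1 _ k _ k _ _ 1 _ k])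
    finally show ?thesis .
  qed
  have WMW: "transpose_mat W * M * W = transpose_mat B * A' * B"
    unfolding W_def A'_def using U B M
    by (simp add: transpose_mult[of _ n n _ n] assoc_mult_mat[of _ n n _ n _ n])
  also have "\<dots> = four_block_mat (mat 1 1 (\<lambda>_. e)) (0\<^sub>m 1 k) (0\<^sub>m k 1) (transpose_mat V * C * V)"
    unfolding B_def A'blk using V C
    by (simp add: transpose_four_block_mat[of _ 1 1 _ k _ k] mult_four_block_mat[of _ 1 1 _ k _ k _ _ 1 _ k])
  finally have WMW: "transpose_mat W * M * W = \<dots>" .
  have "diagonal_mat (transpose_mat W * M * W)"
    unfolding WMW diagonal_mat_def using Vd V C unfolding diagonal_mat_def by auto
  thus ?case using W WtW n_def by blast
qed



definition tr :: "real mat \<Rightarrow> real" where "tr A = (\<Sum>i<dim_row A. A $$ (i,i))"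

lemma tr_comm:
  assumes A: "A \<in> carrier_mat n m" and B: "B \<in> carrier_mat m n"
  shows "tr (A * B) = tr (B * A)"
proof -
  have "tr (A * B) = (\<Sum>i<n. \<Sum>k<m. A $$ (i,k) * B $$ (k,i))"
    unfolding tr_def using A B by (auto intro!: sum.cong simp: scalar_prod_def lessThan_atLeast0)
  also have "\<dots> = (\<Sum>k<m. \<Sum>i<n. B $$ (k,i) * A $$ (i,k))"
    by (subst sum.swap) (simp add: mult.commute)
  also have "\<dots> = tr (B * A)"
    unfolding tr_def using A B by (auto intro!: sum.cong simp: scalar_prod_def lessThan_atLeast0)
  finally show ?thesis .
qed

lemma proots_lin_mult: "p \<noteq> 0 \<Longrightarrow> proots ([:- a, 1:] * p) = add_mset (a::real) (proots p)"
  using proots_mult[of "[:- a, 1:]" p] proots_linear_factor[of "-a"] by simp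

lemma proots_linear_prod: "proots (\<Prod>a\<leftarrow>as. [:- a, 1:]) = mset (as :: real list)"
proof (induction as)
  case (Cons a as)
  have "(\<Prod>a\<leftarrow>as. [:- a, 1:]) \<noteq> (0 :: real poly)" by (auto simp: prod_list_zero_iff)
  from proots_lin_mult[OF this, of a] show ?case using Cons.IH by (simp only: prod_list.Cons list.map mset.simps)
qed simp

lemma sq_vec: "(y :: real vec) \<in> carrier_vec n \<Longrightarrow> y \<bullet> y = (\<Sum>i<n. (y $ i)^2)"
  unfolding scalar_prod_def by (auto simp: power2_eq_square lessThan_atLeast0 intro!: sum.cong)

lemma quad_form:
  fixes U D :: "real mat"
  assumes U: "U \<in> carrier_mat n n" and D: "D \<in> carrier_mat n n" and Dd: "diagonal_mat D"
    and x: "x \<in> carrier_vec n"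
  shows "x \<bullet> ((U * D * transpose_mat U) *\<^sub>v x) = (\<Sum>i<n. D $$ (i,i) * ((transpose_mat U *\<^sub>v x) $ i)^2)"
proof -
  define y where "y = transpose_mat U *\<^sub>v x"
  have y: "y \<in> carrier_vec n" using U x by (simp add: y_def)
  have "(U * D * transpose_mat U) *\<^sub>v x = U *\<^sub>v (D *\<^sub>v y)"
    using U D x by (simp add: y_def assoc_mult_mat_vec[of _ n n _ n])
  hence "x \<bullet> ((U * D * transpose_mat U) *\<^sub>v x) = y \<bullet> (D *\<^sub>v y)"
    using transpose_vec_mult_scalar[OF U, of "D *\<^sub>v y" x] U D y x by (simp add: y_def)
  also have "\<dots> = (\<Sum>i<n. y $ i * (\<Sum>j<n. D $$ (i,j) * y $ j))"
    unfolding scalar_prod_def using D y by (auto intro!: sum.cong simp: lessThan_atLeast0 row_def scalar_prod_def)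
  also have "\<dots> = (\<Sum>i<n. D $$ (i,i) * (y $ i)^2)"
  proof (intro sum.cong refl)
    fix i assume i: "i \<in> {..<n}"
    have "(\<Sum>j<n. D $$ (i,j) * y $ j) = D $$ (i,i) * y $ i"
      by (subst sum.remove[of _ i]) (use i Dd D in \<open>auto simp: diagonal_mat_def\<close>)
    thus "y $ i * (\<Sum>j<n. D $$ (i,j) * y $ j) = D $$ (i,i) * (y $ i)^2"
      by (simp add: power2_eq_square)
  qed
  finally show ?thesis unfolding y_def .
qed

lemma spec_facts:
  fixes M :: "real mat"
  assumes M: "M \<in> carrier_mat n n" and sym: "transpose_mat M = M"
  shows "\<exists>ls. length ls = n \<and> proots (char_poly M) = mset ls \<and> sum_list ls = tr M
    \<and> sum_list (map (\<lambda>x. x^2) ls) = tr (M * M)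
    \<and> (\<forall>x \<in> carrier_vec n. n = 0 \<or> (\<exists>i<n. x \<bullet> ((M * M) *\<^sub>v x) \<le> (ls ! i)^2 * (x \<bullet> x)))
    \<and> (\<forall>x \<in> carrier_vec n. \<forall>c. (\<forall>i<n. ls ! i \<le> c) \<longrightarrow> x \<bullet> (M *\<^sub>v x) \<le> c * (x \<bullet> x))
    \<and> (\<forall>i<n. \<exists>w \<in> carrier_vec n. w \<bullet> w = 1 \<and> w \<bullet> (M *\<^sub>v w) = ls ! i)"
proof -
  obtain U where U: "U \<in> carrier_mat n n" and UtU: "transpose_mat U * U = 1\<^sub>m n"
    and Dd: "diagonal_mat (transpose_mat U * M * U)" using spectral[OF M sym] by blast
  define D where "D = transpose_mat U * M * U"
  have D: "D \<in> carrier_mat n n" using U M by (simp add: D_def)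
  have Ut: "transpose_mat U \<in> carrier_mat n n" using U by simp
  have UUt: "U * transpose_mat U = 1\<^sub>m n" using mat_mult_left_right_inverse[OF Ut U UtU] .
  have MD: "M = U * D * transpose_mat U"
  proof -
    have "U * D * transpose_mat U = (U * transpose_mat U) * M * (U * transpose_mat U)"
      unfolding D_def using U M Ut by (simp add: assoc_mult_mat[of _ n n _ n _ n])
    thus ?thesis using UUt M by simp
  qed
  have Ddg: "diagonal_mat D" using Dd by (simp add: D_def)
  define ls where "ls = diag_mat D"
  have lsi: "ls ! i = D $$ (i,i)" if "i < n" for i using that D by (simp add: ls_def diag_mat_def)
  have len: "length ls = n" using D by (simp add: ls_def diag_mat_def)
  have ut: "upper_triangular D" using Dd D unfolding D_def diagonal_mat_def upper_triangular_def by auto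
  have "similar_mat M D" unfolding similar_mat_def similar_mat_wit_def
    using MD U D M Ut UUt UtU by (intro exI[of _ U] exI[of _ "transpose_mat U"]) (auto simp: Let_def)
  hence "char_poly M = char_poly D" by (rule char_poly_similar)
  also have "\<dots> = (\<Prod>a\<leftarrow>ls. [:- a, 1:])" unfolding ls_def using char_poly_upper_triangular[OF D ut] .
  finally have P1: "proots (char_poly M) = mset ls" by (simp add: proots_linear_prod)
  have trD: "tr D = tr M"
  proof -
    have "tr D = tr ((transpose_mat U * M) * U)" by (simp add: D_def)
    also have "\<dots> = tr (U * (transpose_mat U * M))" using U M by (intro tr_comm[of _ n n]) auto
    also have "U * (transpose_mat U * M) = M" using U M Ut UUt
      by (simp add: assoc_mult_mat[of _ n n _ n _ n, symmetric])
    finally show ?thesis .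
  qed
  have "sum_list ls = tr D"
    unfolding ls_def tr_def diag_mat_def using D
    by (simp add: sum_list_sum_nth lessThan_atLeast0)
  hence P2: "sum_list ls = tr M" using trD by simp
  have DD: "D * D \<in> carrier_mat n n" using D by simp
  have DDd: "diagonal_mat (D * D)" and DDi: "\<And>i. i < n \<Longrightarrow> (D * D) $$ (i,i) = (D $$ (i,i))^2"
  proof -
    have e: "(D * D) $$ (i,j) = D $$ (i,i) * D $$ (i,j)" if "i < n" "j < n" for i j
    proof -
      have "(D * D) $$ (i,j) = (\<Sum>k<n. D $$ (i,k) * D $$ (k,j))"
        using that D by (auto simp: scalar_prod_def lessThan_atLeast0 intro!: sum.cong)
      also have "\<dots> = D $$ (i,i) * D $$ (i,j)"
        by (subst sum.remove[of _ i]) (use that Dd D in \<open>auto simp: D_def[symmetric] diagonal_mat_def\<close>)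
      finally show ?thesis .
    qed
    show "diagonal_mat (D * D)" unfolding diagonal_mat_def using e Dd D
      by (auto simp: D_def[symmetric] diagonal_mat_def)
    show "(D * D) $$ (i,i) = (D $$ (i,i))^2" if "i < n" for i using e[OF that that]
      by (simp add: power2_eq_square)
  qed
  have MM: "M * M = U * (D * D) * transpose_mat U"
  proof -
    have "M * M = U * D * (transpose_mat U * U) * D * transpose_mat U"
      unfolding MD using U D Ut by (simp add: assoc_mult_mat[of _ n n _ n _ n])
    thus ?thesis using UtU U D Ut by (simp add: assoc_mult_mat[of _ n n _ n _ n])
  qed
  have trDD: "tr (D * D) = tr (M * M)"
  proof -
    have "tr (M * M) = tr ((U * (D * D)) * transpose_mat U)" using MM by simp
    also have "\<dots> = tr (transpose_mat U * (U * (D * D)))" using U DD by (intro tr_comm[of _ n n]) auto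
    also have "transpose_mat U * (U * (D * D)) = D * D" using U DD Ut UtU
      by (simp add: assoc_mult_mat[of _ n n _ n _ n, symmetric] left_mult_one_mat[OF DD])
    finally show ?thesis by simp
  qed
  have "sum_list (map (\<lambda>x. x^2) ls) = tr (D * D)"
    unfolding ls_def tr_def diag_mat_def using D DDi
    by (simp add: sum_list_sum_nth lessThan_atLeast0)
  hence P3: "sum_list (map (\<lambda>x. x^2) ls) = tr (M * M)" using trDD by simp
  have P4: "n = 0 \<or> (\<exists>i<n. x \<bullet> ((M * M) *\<^sub>v x) \<le> (ls ! i)^2 * (x \<bullet> x))" if x: "x \<in> carrier_vec n" for x
  proof (cases "n = 0")
    case False
    define y where "y = transpose_mat U *\<^sub>v x"
    have y: "y \<in> carrier_vec n" using U x by (simp add: y_def)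
    have yy: "y \<bullet> y = x \<bullet> x"
      using transpose_vec_mult_scalar[OF U, of y x] U x y UUt
      by (simp add: y_def assoc_mult_mat_vec[of _ n n _ n, symmetric])
    define L where "L = Max ((\<lambda>i. (ls ! i)^2) ` {..<n})"
    have "L \<in> (\<lambda>i. (ls ! i)^2) ` {..<n}"
      unfolding L_def using False by (intro Max_in) auto
    then obtain i where i: "i < n" and Li: "L = (ls ! i)^2" by auto
    have "x \<bullet> ((M * M) *\<^sub>v x) = (\<Sum>j<n. (D $$ (j,j))^2 * (y $ j)^2)"
      unfolding MM using quad_form[OF U DD DDd x] DDi by (simp add: y_def)
    also have "\<dots> \<le> (\<Sum>j<n. L * (y $ j)^2)"
    proof (intro sum_mono mult_right_mono)
      fix j assume "j \<in> {..<n}"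
      thus "(D $$ (j,j))^2 \<le> L" unfolding L_def using lsi by (intro Max_ge) auto
    qed simp
    also have "\<dots> = L * (x \<bullet> x)" using sq_vec[OF y] yy by (simp add: sum_distrib_left)
    finally show ?thesis using i Li by auto
  qed simp
  have P5: "x \<bullet> (M *\<^sub>v x) \<le> c * (x \<bullet> x)" if x: "x \<in> carrier_vec n" and c: "\<forall>i<n. ls ! i \<le> c" for x c
  proof -
    define y where "y = transpose_mat U *\<^sub>v x"
    have y: "y \<in> carrier_vec n" using U x by (simp add: y_def)
    have yy: "y \<bullet> y = x \<bullet> x"
      using transpose_vec_mult_scalar[OF U, of y x] U x y UUt
      by (simp add: y_def assoc_mult_mat_vec[of _ n n _ n, symmetric])
    have "x \<bullet> (M *\<^sub>v x) = (\<Sum>j<n. D $$ (j,j) * (y $ j)^2)"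
      using quad_form[OF U D Ddg x] MD[symmetric] by (simp add: y_def)
    also have "\<dots> \<le> (\<Sum>j<n. c * (y $ j)^2)"
      using c lsi by (intro sum_mono mult_right_mono) auto
    also have "\<dots> = c * (x \<bullet> x)" using sq_vec[OF y] yy by (simp add: sum_distrib_left)
    finally show ?thesis .
  qed
  have P6: "\<exists>w \<in> carrier_vec n. w \<bullet> w = 1 \<and> w \<bullet> (M *\<^sub>v w) = ls ! i" if i: "i < n" for i
  proof -
    define w where "w = col U i"
    have w: "w \<in> carrier_vec n" using U i by (simp add: w_def)
    have yw: "transpose_mat U *\<^sub>v w = unit_vec n i"
    proof (rule eq_vecI)
      fix j assume "j < dim_vec (unit_vec n i)"
      hence j: "j < n" by simp
      have "(transpose_mat U *\<^sub>v w) $ j = (transpose_mat U * U) $$ (j, i)"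
        using U i j by (simp add: w_def)
      thus "(transpose_mat U *\<^sub>v w) $ j = unit_vec n i $ j" using UtU i j by simp
    qed (use U in simp)
    have "w \<bullet> w = (transpose_mat U * U) $$ (i, i)" using U i by (simp add: w_def)
    hence ww: "w \<bullet> w = 1" using UtU i by simp
    have "w \<bullet> (M *\<^sub>v w) = (\<Sum>j<n. D $$ (j,j) * ((unit_vec n i) $ j)^2)"
      using quad_form[OF U D Ddg w] MD[symmetric] yw by simp
    also have "\<dots> = D $$ (i,i)"
      by (subst sum.remove[of _ i]) (use i in auto)
    finally show ?thesis using ww w lsi[OF i] by auto
  qed
  show ?thesis using len P1 P2 P3 P4 P5 P6 by blast
qed



lemma quad_sum:
  fixes M :: "real mat"
  assumes M: "M \<in> carrier_mat n n" and x: "x \<in> carrier_vec n"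
  shows "x \<bullet> (M *\<^sub>v x) = (\<Sum>i<n. \<Sum>j<n. x $ i * M $$ (i,j) * x $ j)"
  using M x by (auto simp: scalar_prod_def lessThan_atLeast0 sum_distrib_left mult.assoc intro!: sum.cong)

lemma A_alpha_carrier: "A_alpha n E a \<in> carrier_mat n n"
  by (simp add: A_alpha_def deg_mat_def adj_mat_def)

lemma A_alpha_entry: "i < n \<Longrightarrow> j < n \<Longrightarrow> A_alpha n E a $$ (i,j) =
   (if i = j then a * real (degree n E i) else 0) + (1 - a) * (if E i j then 1 else 0)"
  by (simp add: A_alpha_def deg_mat_def adj_mat_def)

lemma degree_sum: "real (degree n E i) = (\<Sum>j<n. if E i j then 1 else 0)"
proof -
  have "{j. j < n \<and> E i j} = {j \<in> {..<n}. E i j}" by auto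
  hence "real (degree n E i) = (\<Sum>j\<in>{j \<in> {..<n}. E i j}. 1)" by (simp add: degree_def)
  also have "\<dots> = (\<Sum>j<n. if E i j then 1 else 0)" by (rule sum.inter_filter) simp
  finally show ?thesis .
qed

lemma psd_one: "psd (A_alpha n E 1)"
  unfolding psd_def
proof
  fix x :: "real vec" assume "x \<in> carrier_vec (dim_row (A_alpha n E 1))"
  hence x: "x \<in> carrier_vec n" using A_alpha_carrier[of n E 1] by simp
  have "x \<bullet> (A_alpha n E 1 *\<^sub>v x) = (\<Sum>i<n. \<Sum>j<n. x $ i * A_alpha n E 1 $$ (i,j) * x $ j)"
    by (rule quad_sum[OF A_alpha_carrier x])
  also have "\<dots> = (\<Sum>i<n. real (degree n E i) * (x $ i)^2)"
  proof (intro sum.cong refl)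
    fix i assume i: "i \<in> {..<n}"
    have "(\<Sum>j<n. x $ i * A_alpha n E 1 $$ (i,j) * x $ j) = (\<Sum>j<n. if i = j then real (degree n E i) * (x $ i)^2 else 0)"
      by (intro sum.cong refl) (use i in \<open>auto simp: A_alpha_entry power2_eq_square\<close>)
    also have "\<dots> = real (degree n E i) * (x $ i)^2" using i by simp
    finally show "(\<Sum>j<n. x $ i * A_alpha n E 1 $$ (i,j) * x $ j) = real (degree n E i) * (x $ i)^2" .
  qed
  also have "\<dots> \<ge> 0" by (intro sum_nonneg) auto
  finally show "0 \<le> x \<bullet> (A_alpha n E 1 *\<^sub>v x)" .
qed

lemma alpha0_le1: "alpha0 n E \<le> 1"
  unfolding alpha0_def
  by (rule cInf_lower) (auto simp: psd_one bdd_below_def intro!: exI[of _ 0])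

lemma sum_degree:
  assumes g: "simple_graph n E"
  shows "(\<Sum>i<n. real (degree n E i)) = 2 * real (num_edges n E)"
proof -
  define P where "P = {(i,j). i < n \<and> j < n \<and> E i j}"
  define P1 where "P1 = {(i,j). i < j \<and> j < n \<and> E i j}"
  define P2 where "P2 = {(i,j). j < i \<and> i < n \<and> E i j}"
  have fin: "finite P1" "finite P2"
    by (rule finite_subset[of _ "{..<n} \<times> {..<n}"], auto simp: P1_def P2_def)+
  have "P = P1 \<union> P2" using g unfolding simple_graph_def P_def P1_def P2_def
    by (auto, metis linorder_neqE_nat)
  moreover have "P1 \<inter> P2 = {}" unfolding P1_def P2_def by auto
  ultimately have cP: "card P = card P1 + card P2" using fin card_Un_disjoint by metis
  have "P2 = (\<lambda>(i,j). (j,i)) ` P1" using g unfolding simple_graph_def P1_def P2_def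
    by (auto simp: image_iff) 
  moreover have "inj_on (\<lambda>(i,j). (j,i)) P1" by (auto simp: inj_on_def)
  ultimately have "card P2 = card P1" by (simp add: card_image)
  hence cP': "card P = 2 * num_edges n E" using cP by (simp add: num_edges_def P1_def)
  have "P = Sigma {..<n} (\<lambda>i. {j. j < n \<and> E i j})" unfolding P_def by auto
  hence "card P = (\<Sum>i<n. degree n E i)" by (simp add: card_SigmaI degree_def)
  hence "(\<Sum>i<n. degree n E i) = 2 * num_edges n E" using cP' by simp
  hence "real (\<Sum>i<n. degree n E i) = 2 * real (num_edges n E)" by simp
  thus ?thesis by simp
qed



lemma cs_list: "(sum_list (xs::real list))^2 \<le> real (length xs) * sum_list (map (\<lambda>x. x^2) xs)"
proof (induction xs)
  case Nil then show ?case by simp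
next
  case (Cons x xs)
  define S where "S = sum_list xs"
  define Q where "Q = sum_list (map (\<lambda>x. x^2) xs)"
  define k where "k = real (length xs)"
  have IH: "S^2 \<le> k * Q" using Cons unfolding S_def Q_def k_def .
  have Q0: "Q \<ge> 0" unfolding Q_def by (induction xs) auto
  have k0: "k \<ge> 0" unfolding k_def by simp
  have key: "2 * x * S \<le> k * x^2 + Q"
  proof (cases "k = 0")
    case True
    hence "S = 0" using IH by simp
    thus ?thesis using Q0 True by simp
  next
    case False
    hence kp: "k > 0" using k0 by simp
    have "k * (2 * x * S) \<le> k * (k * x^2 + Q)"
    proof -
      have "0 \<le> (k * x - S)^2" by simp
      hence "2 * k * x * S \<le> k^2 * x^2 + S^2" by (simp add: power2_eq_square algebra_simps)
      thus ?thesis using IH by (simp add: power2_eq_square algebra_simps)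
    qed
    thus ?thesis using kp by simp
  qed
  have "(sum_list (x # xs))^2 = x^2 + 2 * x * S + S^2" by (simp add: S_def power2_eq_square algebra_simps)
  also have "\<dots> \<le> (k + 1) * (x^2 + Q)" using key IH by (simp add: algebra_simps)
  finally show ?case by (simp add: S_def Q_def k_def algebra_simps)
qed

lemma sum_list_filter_split: "sum_list (filter P xs) + sum_list (filter (\<lambda>x. \<not> P x) xs) = sum_list (xs :: real list)"
  by (induction xs) auto

lemma sorted_desc_take: "sorted_wrt (\<ge>) (ys :: real list) \<Longrightarrow>
  take (length (filter (\<lambda>x. 0 < x) ys)) ys = filter (\<lambda>x. 0 < x) ys"
proof (induction ys)
  case Nil then show ?case by simp
next
  case (Cons y ys)
  show ?case
  proof (cases "0 < y")
    case True thus ?thesis using Cons by simp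
  next
    case False
    hence "filter (\<lambda>x. 0 < x) ys = []" using Cons.prems by (auto simp: filter_empty_conv)
    thus ?thesis using False by simp
  qed
qed

lemma take_pos_sort: "sum_list (take (length (filter (\<lambda>x. 0 < x) xs)) (rev (sort (xs :: real list))))
   = sum_list (filter (\<lambda>x. 0 < x) xs)"
proof -
  have s: "sorted_wrt (\<ge>) (rev (sort xs))" by (simp add: sorted_wrt_rev)
  have m: "mset (rev (sort xs)) = mset xs" by simp
  have l: "length (filter (\<lambda>x. 0 < x) xs) = length (filter (\<lambda>x. 0 < x) (rev (sort xs)))"
    by (metis m mset_filter size_mset)
  have "sum_list (filter (\<lambda>x. 0 < x) (rev (sort xs))) = sum_list (filter (\<lambda>x. 0 < x) xs)"
    by (metis m mset_filter sum_mset_sum_list)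
  thus ?thesis using sorted_desc_take[OF s] l by simp
qed

lemma list_bound:
  fixes ls :: "real list" and u lm :: real
  assumes lm: "lm \<in> set ls" "lm > 0" "lm^2 \<ge> u" and u: "u > 0"
  shows "sum_list (filter (\<lambda>x. 0 < x) ls) - sum_list ls
     \<le> (sum_list (map (\<lambda>x. x^2) ls) / 2) * sqrt (real (length (filter (\<lambda>x. \<not> 0 < x) ls)) / u)"
proof -
  define ps where "ps = filter (\<lambda>x. 0 < x) ls"
  define ns where "ns = filter (\<lambda>x. \<not> 0 < x) ls"
  define T where "T = sum_list (map (\<lambda>x. x^2) ls)"
  define k where "k = real (length ns)"
  define N where "N = sum_list ps - sum_list ls"
  have N: "N = - sum_list ns" using sum_list_filter_split[of "\<lambda>x. 0 < x" ls]
    unfolding N_def ps_def ns_def by simp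
  have T: "T = sum_list (map (\<lambda>x. x^2) ps) + sum_list (map (\<lambda>x. x^2) ns)"
    unfolding T_def ps_def ns_def by (induction ls) auto
  have N0: "N \<ge> 0" unfolding N ns_def by (induction ls) auto
  have Tn0: "sum_list (map (\<lambda>x. x^2) ns) \<ge> 0" by (induction ns) auto
  have "lm \<in> set ps" using lm unfolding ps_def by simp
  hence "lm^2 \<le> sum_list (map (\<lambda>x. x^2) ps)"
    by (intro member_le_sum_list) auto
  hence Tn: "sum_list (map (\<lambda>x. x^2) ns) \<le> T - u" using T lm by simp
  have "N^2 \<le> k * sum_list (map (\<lambda>x. x^2) ns)" using cs_list[of ns] unfolding N k_def by simp
  also have "\<dots> \<le> k * (T - u)" using Tn by (intro mult_left_mono) (auto simp: k_def)
  also have "\<dots> \<le> k * (T^2 / (4 * u))"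
  proof (intro mult_left_mono)
    have "0 \<le> (T - 2 * u)^2" by simp
    hence "4 * u * (T - u) \<le> T^2" by (simp add: power2_eq_square algebra_simps)
    thus "T - u \<le> T^2 / (4 * u)" using u by (simp add: field_simps)
  qed (simp add: k_def)
  also have "\<dots> = (T / 2 * sqrt (k / u))^2" using u
    by (simp add: power_mult_distrib k_def power2_eq_square field_simps)
  finally have "N^2 \<le> (T / 2 * sqrt (k / u))^2" .
  moreover have "T \<ge> 0" unfolding T_def by (induction ls) auto
  hence "T / 2 * sqrt (k / u) \<ge> 0" using u by (simp add: k_def)
  ultimately have "N \<le> T / 2 * sqrt (k / u)" using N0 by (meson power2_le_imp_le)
  thus ?thesis unfolding N_def ps_def T_def k_def ns_def by simp
qed



lemma M_dims[simp]: "dim_row (A_alpha n E a) = n" "dim_col (A_alpha n E a) = n"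
  using A_alpha_carrier[of n E a] by auto

lemma M_sym: assumes g: "simple_graph n E" shows "transpose_mat (A_alpha n E a) = A_alpha n E a"
proof (rule eq_matI)
  fix i j assume "i < dim_row (A_alpha n E a)" "j < dim_col (A_alpha n E a)"
  hence i: "i < n" and j: "j < n" by auto
  show "transpose_mat (A_alpha n E a) $$ (i, j) = A_alpha n E a $$ (i, j)"
    using g i j by (auto simp: A_alpha_entry simple_graph_def)
qed auto

lemma M_entry_irr: assumes g: "simple_graph n E" and i: "i < n" and j: "j < n"
  shows "A_alpha n E a $$ (i,j) = (if i = j then a * real (degree n E i) else (1 - a) * (if E i j then 1 else 0))"
  using g i j by (auto simp: A_alpha_entry simple_graph_def)

lemma M_tr: assumes g: "simple_graph n E"
  shows "tr (A_alpha n E a) = 2 * a * real (num_edges n E)"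
proof -
  have "tr (A_alpha n E a) = (\<Sum>i<n. a * real (degree n E i))"
    unfolding tr_def using A_alpha_carrier[of n E a] by (auto intro!: sum.cong simp: M_entry_irr[OF g])
  also have "\<dots> = 2 * a * real (num_edges n E)"
    using sum_degree[OF g] by (simp add: sum_distrib_left[symmetric])
  finally show ?thesis .
qed

lemma M_trsq: assumes g: "simple_graph n E"
  shows "tr (A_alpha n E a * A_alpha n E a) = a^2 * real (zagreb1 n E) + 2 * real (num_edges n E) * (1 - a)^2"
proof -
  let ?M = "A_alpha n E a"
  have M: "?M \<in> carrier_mat n n" by (rule A_alpha_carrier)
  have "tr (?M * ?M) = (\<Sum>i<n. \<Sum>k<n. ?M $$ (i,k) * ?M $$ (k,i))"
    unfolding tr_def using M by (auto intro!: sum.cong simp: scalar_prod_def lessThan_atLeast0)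
  also have "\<dots> = (\<Sum>i<n. a^2 * (real (degree n E i))^2 + (1 - a)^2 * real (degree n E i))"
  proof (intro sum.cong refl)
    fix i assume i: "i \<in> {..<n}"
    have "(\<Sum>k<n. ?M $$ (i,k) * ?M $$ (k,i)) =
       (\<Sum>k<n. (if i = k then a^2 * (real (degree n E i))^2 else 0) + (1 - a)^2 * (if E i k then 1 else 0))"
    proof (intro sum.cong refl)
      fix k assume k: "k \<in> {..<n}"
      show "?M $$ (i,k) * ?M $$ (k,i) = (if i = k then a^2 * (real (degree n E i))^2 else 0) + (1 - a)^2 * (if E i k then 1 else 0)"
        using g i k by (auto simp: M_entry_irr[OF g] simple_graph_def power2_eq_square)
    qed
    also have "\<dots> = a^2 * (real (degree n E i))^2 + (1 - a)^2 * real (degree n E i)"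
      using i by (simp add: sum.distrib degree_sum sum_distrib_left)
    finally show "(\<Sum>k<n. ?M $$ (i,k) * ?M $$ (k,i)) = a^2 * (real (degree n E i))^2 + (1 - a)^2 * real (degree n E i)" .
  qed
  also have "\<dots> = a^2 * (\<Sum>i<n. (real (degree n E i))^2) + (1 - a)^2 * (\<Sum>i<n. real (degree n E i))"
    by (simp add: sum.distrib sum_distrib_left)
  also have "\<dots> = a^2 * real (zagreb1 n E) + 2 * real (num_edges n E) * (1 - a)^2"
    using sum_degree[OF g] by (simp add: zagreb1_def)
  finally show ?thesis .
qed

lemma M_one: assumes g: "simple_graph n E"
  shows "A_alpha n E a *\<^sub>v vec n (\<lambda>_. 1) = vec n (\<lambda>i. real (degree n E i))"
proof (rule eq_vecI)
  fix i assume "i < dim_vec (vec n (\<lambda>i. real (degree n E i)))"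
  hence i: "i < n" by simp
  have "(A_alpha n E a *\<^sub>v vec n (\<lambda>_. 1)) $ i = (\<Sum>j<n. A_alpha n E a $$ (i,j))"
    using i A_alpha_carrier[of n E a] by (auto simp: scalar_prod_def lessThan_atLeast0 intro!: sum.cong)
  also have "\<dots> = (\<Sum>j<n. (if i = j then a * real (degree n E i) else 0) + (1 - a) * (if E i j then 1 else 0))"
    using i by (intro sum.cong refl) (auto simp: A_alpha_entry)
  also have "\<dots> = (\<Sum>j<n. if i = j then a * real (degree n E i) else 0) + (1 - a) * (\<Sum>j<n. if E i j then 1 else 0)"
    by (simp add: sum.distrib sum_distrib_left)
  also have "\<dots> = a * real (degree n E i) + (1 - a) * real (degree n E i)"
    using i by (simp add: degree_sum)
  also have "\<dots> = real (degree n E i)" by (simp add: algebra_simps)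
  finally show "(A_alpha n E a *\<^sub>v vec n (\<lambda>_. 1)) $ i = vec n (\<lambda>i. real (degree n E i)) $ i"
    using i by simp
qed (simp add: A_alpha_carrier[unfolded carrier_mat_def])

lemma M_nonneg: "0 \<le> a \<Longrightarrow> a \<le> 1 \<Longrightarrow> i < n \<Longrightarrow> j < n \<Longrightarrow> A_alpha n E a $$ (i,j) \<ge> 0"
  by (auto simp: A_alpha_entry)

lemma abs_quad:
  fixes M :: "real mat"
  assumes M: "M \<in> carrier_mat n n" and nn: "\<And>i j. i < n \<Longrightarrow> j < n \<Longrightarrow> M $$ (i,j) \<ge> 0"
    and w: "w \<in> carrier_vec n"
  shows "\<bar>w \<bullet> (M *\<^sub>v w)\<bar> \<le> vec n (\<lambda>j. \<bar>w $ j\<bar>) \<bullet> (M *\<^sub>v vec n (\<lambda>j. \<bar>w $ j\<bar>))"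
proof -
  have w': "vec n (\<lambda>j. \<bar>w $ j\<bar>) \<in> carrier_vec n" by simp
  have "\<bar>w \<bullet> (M *\<^sub>v w)\<bar> = \<bar>\<Sum>i<n. \<Sum>j<n. w $ i * M $$ (i,j) * w $ j\<bar>" using quad_sum[OF M w] by simp
  also have "\<dots> \<le> (\<Sum>i<n. \<bar>\<Sum>j<n. w $ i * M $$ (i,j) * w $ j\<bar>)" by (rule sum_abs)
  also have "\<dots> \<le> (\<Sum>i<n. \<Sum>j<n. \<bar>w $ i * M $$ (i,j) * w $ j\<bar>)" by (intro sum_mono sum_abs)
  also have "\<dots> = (\<Sum>i<n. \<Sum>j<n. \<bar>w $ i\<bar> * M $$ (i,j) * \<bar>w $ j\<bar>)"
    using nn by (intro sum.cong refl) (auto simp: abs_mult)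
  also have "\<dots> = vec n (\<lambda>j. \<bar>w $ j\<bar>) \<bullet> (M *\<^sub>v vec n (\<lambda>j. \<bar>w $ j\<bar>))"
    using quad_sum[OF M w'] by simp
  finally show ?thesis .
qed



theorem theorem3p4:
  fixes n :: nat and E :: "nat \<Rightarrow> nat \<Rightarrow> bool" and a :: real
  assumes "simple_graph n E"
    and "0 \<le> a" and "a < alpha0 n E"
  shows "S_k (pos_inertia (A_alpha n E a)) (A_alpha n E a)
    \<le> 2 * a * real (num_edges n E)
       + (1/2) * (2 * real (num_edges n E) * (1 - a)^2 + a^2 * real (zagreb1 n E))
         * sqrt (real n * (real n - real (pos_inertia (A_alpha n E a))) / real (zagreb1 n E))"
proof -
  note g = assms(1)
  define M where "M = A_alpha n E a"
  define m where "m = real (num_edges n E)"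
  define Z where "Z = real (zagreb1 n E)"
  have a1: "a \<le> 1" using assms(3) alpha0_le1[of n E] by linarith
  have M: "M \<in> carrier_mat n n" unfolding M_def by (rule A_alpha_carrier)
  have sym: "transpose_mat M = M" unfolding M_def by (rule M_sym[OF g])
  obtain ls where len: "length ls = n" and P1: "proots (char_poly M) = mset ls"
    and P2: "sum_list ls = tr M" and P3: "sum_list (map (\<lambda>x. x^2) ls) = tr (M * M)"
    and P4: "\<And>x. x \<in> carrier_vec n \<Longrightarrow> n = 0 \<or> (\<exists>i<n. x \<bullet> ((M * M) *\<^sub>v x) \<le> (ls ! i)^2 * (x \<bullet> x))"
    and P5: "\<And>x c. x \<in> carrier_vec n \<Longrightarrow> (\<forall>i<n. ls ! i \<le> c) \<Longrightarrow> x \<bullet> (M *\<^sub>v x) \<le> c * (x \<bullet> x)"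
    and P6: "\<And>i. i < n \<Longrightarrow> \<exists>w \<in> carrier_vec n. w \<bullet> w = 1 \<and> w \<bullet> (M *\<^sub>v w) = ls ! i"
    using spec_facts[OF M sym] by blast
  have p: "pos_inertia M = length (filter (\<lambda>x. 0 < x) ls)"
    unfolding pos_inertia_def P1 by (metis mset_filter size_mset)
  have S: "S_k (pos_inertia M) M = sum_list (filter (\<lambda>x. 0 < x) ls)"
    unfolding S_k_def eigs_desc_def P1 p by (simp add: take_pos_sort)
  have k: "real n - real (pos_inertia M) = real (length (filter (\<lambda>x. \<not> 0 < x) ls))"
    using sum_length_filter_compl[of "\<lambda>x. 0 < x" ls] len p by simp
  have sumls: "sum_list ls = 2 * a * m" using P2 M_tr[OF g] by (simp add: M_def m_def)
  have T: "sum_list (map (\<lambda>x. x^2) ls) = a^2 * Z + 2 * m * (1 - a)^2"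
    using P3 M_trsq[OF g] by (simp add: M_def m_def Z_def)
  have goal: "sum_list (filter (\<lambda>x. 0 < x) ls) \<le> 2 * a * m
       + (1/2) * (2 * m * (1 - a)^2 + a^2 * Z)
         * sqrt (real n * real (length (filter (\<lambda>x. \<not> 0 < x) ls)) / Z)"
  proof (cases "Z = 0")
    case True
    have z0: "zagreb1 n E = 0" using True by (simp add: Z_def)
    have d0: "degree n E i = 0" if "i < n" for i
      using z0 that unfolding zagreb1_def by (simp add: sum_eq_0_iff)
    have "m = 0" using sum_degree[OF g] d0 by (simp add: m_def)
    hence T0: "sum_list (map (\<lambda>x. x^2) ls) = 0" using T True by simp
    have "x = 0" if "x \<in> set ls" for x
    proof -
      have "x^2 \<le> sum_list (map (\<lambda>x. x^2) ls)"
        using that by (intro member_le_sum_list) auto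
      thus ?thesis using T0 by simp
    qed
    hence "filter (\<lambda>x. 0 < x) ls = []" by (auto simp: filter_empty_conv)
    thus ?thesis using True \<open>m = 0\<close> by simp
  next
    case False
    hence Zp: "Z > 0" by (simp add: Z_def)
    have n0: "n > 0" using Zp by (cases n) (auto simp: Z_def zagreb1_def)
    define x1 where "x1 = vec n (\<lambda>_. 1::real)"
    define dv where "dv = vec n (\<lambda>i. real (degree n E i))"
    have x1: "x1 \<in> carrier_vec n" and dv: "dv \<in> carrier_vec n" by (auto simp: x1_def dv_def)
    have Mx1: "M *\<^sub>v x1 = dv" unfolding M_def x1_def dv_def by (rule M_one[OF g])
    have x1x1: "x1 \<bullet> x1 = real n" using sq_vec[OF x1] by (simp add: x1_def)
    have "x1 \<bullet> ((M * M) *\<^sub>v x1) = x1 \<bullet> (M *\<^sub>v dv)"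
      using M x1 by (simp add: Mx1[symmetric])
    also have "\<dots> = (transpose_mat M *\<^sub>v x1) \<bullet> dv"
      using transpose_vec_mult_scalar[OF M dv x1] by simp
    also have "\<dots> = Z" using sym Mx1 sq_vec[OF dv]
      by (simp add: Z_def zagreb1_def dv_def)
    finally have Zq: "x1 \<bullet> ((M * M) *\<^sub>v x1) = Z" .
    obtain i0 where i0: "i0 < n" and Zi0: "Z \<le> (ls ! i0)^2 * real n"
      using P4[OF x1] n0 Zq x1x1 by auto
    define lm where "lm = Max (set ls)"
    have lsne: "ls \<noteq> []" using len n0 by auto
    have lmin: "lm \<in> set ls" unfolding lm_def using lsne by simp
    have lmge: "\<forall>i<n. ls ! i \<le> lm" unfolding lm_def using len by auto
    obtain w where w: "w \<in> carrier_vec n" and ww: "w \<bullet> w = 1" and wMw: "w \<bullet> (M *\<^sub>v w) = ls ! i0"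
      using P6[OF i0] by blast
    define w' where "w' = vec n (\<lambda>j. \<bar>w $ j\<bar>)"
    have w': "w' \<in> carrier_vec n" by (simp add: w'_def)
    have w'w': "w' \<bullet> w' = 1" using sq_vec[OF w'] sq_vec[OF w] ww by (simp add: w'_def)
    have nn: "\<And>i j. i < n \<Longrightarrow> j < n \<Longrightarrow> M $$ (i,j) \<ge> 0"
      unfolding M_def using assms(2) a1 by (rule M_nonneg)
    have "\<bar>ls ! i0\<bar> \<le> w' \<bullet> (M *\<^sub>v w')" using abs_quad[OF M nn w] wMw by (simp add: w'_def)
    also have "\<dots> \<le> lm * (w' \<bullet> w')" by (rule P5[OF w' lmge])
    finally have abslm: "\<bar>ls ! i0\<bar> \<le> lm" using w'w' by simp
    define u where "u = Z / real n"
    have up: "u > 0" using Zp n0 by (simp add: u_def)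
    have ui0: "u \<le> (ls ! i0)^2" using Zi0 n0 by (simp add: u_def field_simps)
    have "(ls ! i0)^2 \<le> lm^2"
      using abslm by (metis abs_ge_zero power2_abs power_mono)
    hence lmu: "lm^2 \<ge> u" using ui0 by simp
    have "ls ! i0 \<noteq> 0" using ui0 up by auto
    hence lmp: "lm > 0" using abslm by linarith
    have "sum_list (filter (\<lambda>x. 0 < x) ls) - sum_list ls
       \<le> (sum_list (map (\<lambda>x. x^2) ls) / 2) * sqrt (real (length (filter (\<lambda>x. \<not> 0 < x) ls)) / u)"
      by (rule list_bound[OF lmin lmp lmu up])
    moreover have "real (length (filter (\<lambda>x. \<not> 0 < x) ls)) / u
        = real n * real (length (filter (\<lambda>x. \<not> 0 < x) ls)) / Z"
      using n0 Zp by (simp add: u_def field_simps)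
    ultimately show ?thesis using sumls T by (simp add: algebra_simps)
  qed
  show ?thesis using goal S k by (simp add: M_def m_def Z_def)
qed


end
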